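(* Let $F$ be a finite field of characteristic $3$. Let $k\ge 0$ be an integer, $m=3k+1$, and $t$ an integer with $t^3\equiv 1\pmod m$ and $\gcd(m,t-1)=1$. Let $G=T_{3m}=\langle x,y\mid x^m=y^3=1,\ y^{-1}xy=x^t\rangle$ (of order $3m$) and $FG$ its group algebra. Let $s\in FG$ be the sum of all elements of $G$ whose order is a power of $3$ (including the identity). Then $J(FG)=\{\alpha\in FG\mid \alpha s=s\alpha=0\}$.
   Context: $J(FG)$ denotes the Jacobson radical of $FG$. *)

theory Defs
  imports "HOL-Algebra.Algebra"
begin

text \<open>The group T_{3m} = <x,y | x^m = y^3 = 1, y^-1 x y = x^t>, realised concretely:
  the pair (a,b) with 0 \<le> a < m, 0 \<le> b < 3 stands for x^a y^b.  From y^-1 x y = x^t and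
  t^3 = 1 (mod m) one gets y x y^-1 = x^(t^2), hence
  (x^a y^b)(x^c y^d) = x^(a + c t^(2b)) y^(b+d).\<close>

definition T_grp :: "int \<Rightarrow> int \<Rightarrow> (int \<times> int) monoid" where
  "T_grp m t = \<lparr> carrier = {0..<m} \<times> {0..<3},
     monoid.mult = (\<lambda>(a,b) (c,d). ((a + c * t ^ (2 * nat b)) mod m, (b + d) mod 3)),
     monoid.one = (0, 0) \<rparr>"

definition group_algebra :: "('g, 'm) monoid_scheme \<Rightarrow> ('g \<Rightarrow> 'a::field) ring" where
  "group_algebra G = \<lparr> carrier = {f. \<forall>g. g \<notin> carrier G \<longrightarrow> f g = 0},
     monoid.mult = (\<lambda>f h g. if g \<in> carrier G
                      then (\<Sum>p\<in>carrier G. f p * h (inv\<^bsub>G\<^esub> p \<otimes>\<^bsub>G\<^esub> g)) else 0),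
     monoid.one = (\<lambda>g. if g = \<one>\<^bsub>G\<^esub> then 1 else 0),
     ring.zero = (\<lambda>g. 0),
     ring.add = (\<lambda>f h g. f g + h g) \<rparr>"

definition left_ideal :: "('b, 'm) ring_scheme \<Rightarrow> 'b set \<Rightarrow> bool" where
  "left_ideal R I \<longleftrightarrow> additive_subgroup I R \<and>
     (\<forall>r\<in>carrier R. \<forall>a\<in>I. r \<otimes>\<^bsub>R\<^esub> a \<in> I)"

definition maximal_left_ideal :: "('b, 'm) ring_scheme \<Rightarrow> 'b set \<Rightarrow> bool" where
  "maximal_left_ideal R I \<longleftrightarrow> left_ideal R I \<and> I \<noteq> carrier R \<and>
     (\<forall>J. left_ideal R J \<and> I \<subseteq> J \<and> J \<noteq> carrier R \<longrightarrow> J = I)"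

definition jacobson_radical :: "('b, 'm) ring_scheme \<Rightarrow> 'b set" where
  "jacobson_radical R = carrier R \<inter> \<Inter> {I. maximal_left_ideal R I}"

end

theory Submission
  imports Defs
begin

lemma ga_carrier: "carrier (group_algebra G) = {f. \<forall>g. g \<notin> carrier G \<longrightarrow> f g = 0}"
  by (simp add: group_algebra_def)

lemma ga_mult: "f \<otimes>\<^bsub>group_algebra G\<^esub> h = (\<lambda>g. if g \<in> carrier G
                      then (\<Sum>p\<in>carrier G. f p * h (inv\<^bsub>G\<^esub> p \<otimes>\<^bsub>G\<^esub> g)) else 0)"
  by (simp add: group_algebra_def)

lemma ga_one: "\<one>\<^bsub>group_algebra G\<^esub> = (\<lambda>g. if g = \<one>\<^bsub>G\<^esub> then 1 else 0)"
  by (simp add: group_algebra_def)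

lemma ga_zero: "\<zero>\<^bsub>group_algebra G\<^esub> = (\<lambda>g. 0)"
  by (simp add: group_algebra_def)

lemma ga_add: "f \<oplus>\<^bsub>group_algebra G\<^esub> h = (\<lambda>g. f g + h g)"
  by (simp add: group_algebra_def)

lemma if10_mult: "(if P then 1 else 0) * (c::'a::ring_1) = (if P then c else 0)"
  by simp
lemma mult_if10: "(c::'a::ring_1) * (if P then 1 else 0) = (if P then c else 0)"
  by simp

lemma ga_assoc_pt:
  fixes G :: "('g,'m) monoid_scheme" (structure) and f h k :: "'g \<Rightarrow> 'a::field"
  assumes "group G" "finite (carrier G)" "g \<in> carrier G"
  shows "(\<Sum>p\<in>carrier G. (\<Sum>q\<in>carrier G. f q * h (inv\<^bsub>G\<^esub> q \<otimes>\<^bsub>G\<^esub> p)) * k (inv\<^bsub>G\<^esub> p \<otimes>\<^bsub>G\<^esub> g))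
       = (\<Sum>q\<in>carrier G. f q * (\<Sum>r\<in>carrier G. h r * k (inv\<^bsub>G\<^esub> r \<otimes>\<^bsub>G\<^esub> (inv\<^bsub>G\<^esub> q \<otimes>\<^bsub>G\<^esub> g))))"
    (is "?L = ?R")
proof -
  interpret group G by fact
  have "?L = (\<Sum>p\<in>carrier G. \<Sum>q\<in>carrier G. f q * (h (inv q \<otimes> p) * k (inv p \<otimes> g)))"
    by (simp add: sum_distrib_right mult.assoc)
  also have "\<dots> = (\<Sum>q\<in>carrier G. \<Sum>p\<in>carrier G. f q * (h (inv q \<otimes> p) * k (inv p \<otimes> g)))"
    by (rule sum.swap)
  also have "\<dots> = ?R"
  proof (rule sum.cong[OF refl])
    fix q assume q: "q \<in> carrier G"
    have bij: "bij_betw (\<lambda>r. q \<otimes> r) (carrier G) (carrier G)"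
      using q by (simp add: bij_betw_def inj_on_cmult surj_const_mult)
    have "(\<Sum>p\<in>carrier G. f q * (h (inv q \<otimes> p) * k (inv p \<otimes> g)))
        = (\<Sum>r\<in>carrier G. f q * (h (inv q \<otimes> (q \<otimes> r)) * k (inv (q \<otimes> r) \<otimes> g)))"
      by (rule sum.reindex_bij_betw[OF bij, symmetric])
    also have "\<dots> = (\<Sum>r\<in>carrier G. f q * (h r * k (inv r \<otimes> (inv q \<otimes> g))))"
      using q assms(3) by (intro sum.cong refl) (simp add: inv_mult_group m_assoc flip: m_assoc[of "inv q" q])
    also have "\<dots> = f q * (\<Sum>r\<in>carrier G. h r * k (inv r \<otimes> (inv q \<otimes> g)))"
      by (simp add: sum_distrib_left)
    finally show "(\<Sum>p\<in>carrier G. f q * (h (inv q \<otimes> p) * k (inv p \<otimes> g))) = f q * (\<Sum>r\<in>carrier G. h r * k (inv r \<otimes> (inv q \<otimes> g)))" .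
  qed
  finally show ?thesis .
qed

lemma ga_ring:
  fixes G :: "('g,'m) monoid_scheme" (structure)
  assumes "group G" "finite (carrier G)"
  shows "ring (group_algebra G :: ('g \<Rightarrow> 'a::field) ring)"
proof -
  interpret group G by fact
  let ?A = "group_algebra G :: ('g \<Rightarrow> 'a::field) ring"
  show ?thesis
  proof (rule ringI)
    show "abelian_group ?A"
    proof (rule abelian_groupI)
      fix x assume "x \<in> carrier ?A"
      then show "\<exists>y\<in>carrier ?A. y \<oplus>\<^bsub>?A\<^esub> x = \<zero>\<^bsub>?A\<^esub>"
        by (intro bexI[of _ "\<lambda>g. - x g"]) (auto simp: ga_carrier ga_add ga_zero)
    qed (auto simp: ga_carrier ga_add ga_zero add.assoc add.commute)
  next
    show "monoid ?A"
    proof (rule monoidI)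
      fix x y z assume xyz: "x \<in> carrier ?A" "y \<in> carrier ?A" "z \<in> carrier ?A"
      show "x \<otimes>\<^bsub>?A\<^esub> y \<otimes>\<^bsub>?A\<^esub> z = x \<otimes>\<^bsub>?A\<^esub> (y \<otimes>\<^bsub>?A\<^esub> z)"
        unfolding ga_mult
        by (rule ext) (simp add: ga_assoc_pt[OF assms])
    next
      fix x assume x: "x \<in> carrier ?A"
      show "\<one>\<^bsub>?A\<^esub> \<otimes>\<^bsub>?A\<^esub> x = x"
      proof (rule ext)
        fix g
        have "g \<in> carrier G \<Longrightarrow> (\<Sum>p\<in>carrier G. (if p = \<one> then 1 else 0) * x (inv p \<otimes> g)) = x g"
          using assms(2) by (simp add: if10_mult sum.delta)
        then show "(\<one>\<^bsub>?A\<^esub> \<otimes>\<^bsub>?A\<^esub> x) g = x g"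
          using x by (auto simp: ga_mult ga_one ga_carrier)
      qed
      show "x \<otimes>\<^bsub>?A\<^esub> \<one>\<^bsub>?A\<^esub> = x"
      proof (rule ext)
        fix g
        have "g \<in> carrier G \<Longrightarrow> p \<in> carrier G \<Longrightarrow> (inv p \<otimes> g = \<one>) = (p = g)" for p
          by (metis inv_solve_left' r_one one_closed)
        then show "(x \<otimes>\<^bsub>?A\<^esub> \<one>\<^bsub>?A\<^esub>) g = x g"
          using x assms(2) by (auto simp: ga_mult ga_one ga_carrier mult_if10 sum.delta)
      qed
    qed (auto simp: ga_carrier ga_mult ga_one)
  qed (auto simp: ga_carrier ga_mult ga_add sum.distrib distrib_left distrib_right)
qed

lemma (in ring) left_idealI':
  assumes "I \<subseteq> carrier R" "\<zero> \<in> I" "\<And>a b. a \<in> I \<Longrightarrow> b \<in> I \<Longrightarrow> a \<oplus> b \<in> I"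
    "\<And>r a. r \<in> carrier R \<Longrightarrow> a \<in> I \<Longrightarrow> r \<otimes> a \<in> I"
  shows "left_ideal R I"
proof -
  have neg: "\<ominus> a \<in> I" if "a \<in> I" for a
  proof -
    have "a \<in> carrier R" using that assms(1) by auto
    then have "\<ominus> a = (\<ominus> \<one>) \<otimes> a" by (simp add: l_minus)
    then show ?thesis using assms(4)[of "\<ominus> \<one>" a] that by simp
  qed
  have "subgroup I (add_monoid R)"
    by (rule add.subgroupI) (use assms neg in auto)
  then show ?thesis unfolding left_ideal_def using assms(4) by (simp add: additive_subgroupI)
qed

lemma left_ideal_subset: "left_ideal R I \<Longrightarrow> I \<subseteq> carrier R"
  unfolding left_ideal_def by (elim conjE) (rule additive_subgroup.a_subset)

lemma left_ideal_add: "left_ideal R I \<Longrightarrow> a \<in> I \<Longrightarrow> b \<in> I \<Longrightarrow> a \<oplus>\<^bsub>R\<^esub> b \<in> I"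
  unfolding left_ideal_def by (elim conjE) (rule additive_subgroup.a_closed)

lemma left_ideal_zero: "left_ideal R I \<Longrightarrow> \<zero>\<^bsub>R\<^esub> \<in> I"
  unfolding left_ideal_def by (elim conjE) (rule additive_subgroup.zero_closed)

lemma left_ideal_mult: "left_ideal R I \<Longrightarrow> r \<in> carrier R \<Longrightarrow> a \<in> I \<Longrightarrow> r \<otimes>\<^bsub>R\<^esub> a \<in> I"
  unfolding left_ideal_def by blast

lemma exists_maximal_left_ideal:
  assumes "finite (carrier R)" "left_ideal R L" "L \<noteq> carrier R"
  shows "\<exists>M. maximal_left_ideal R M \<and> L \<subseteq> M"
proof -
  define S where "S = {I. left_ideal R I \<and> L \<subseteq> I \<and> I \<noteq> carrier R}"
  have "S \<subseteq> Pow (carrier R)" unfolding S_def using left_ideal_subset by auto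
  moreover have "finite (Pow (carrier R))" using assms(1) by simp
  ultimately have fin: "finite S" by (rule finite_subset)
  have "L \<in> S" using assms unfolding S_def by simp
  then have "S \<noteq> {}" by auto
  from finite_has_maximal[OF fin this] obtain M where M: "M \<in> S" "\<forall>I\<in>S. M \<le> I \<longrightarrow> M = I"
    by blast
  have "maximal_left_ideal R M"
    unfolding maximal_left_ideal_def
  proof (intro conjI allI impI)
    fix J assume J: "left_ideal R J \<and> M \<subseteq> J \<and> J \<noteq> carrier R"
    have "L \<subseteq> J" using M(1) J unfolding S_def by auto
    then have "J \<in> S" using J unfolding S_def by simp
    then show "J = M" using M(2) J by blast
  qed (use M(1) in \<open>simp_all add: S_def\<close>)
  then show ?thesis using M(1) unfolding S_def by auto
qed

lemma (in ring) J_carrier: "x \<in> jacobson_radical R \<Longrightarrow> x \<in> carrier R"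
  unfolding jacobson_radical_def by (rule IntD1)

lemma (in ring) J_mem: "x \<in> jacobson_radical R \<Longrightarrow> maximal_left_ideal R M \<Longrightarrow> x \<in> M"
  unfolding jacobson_radical_def by simp

lemma maximal_left_ideal_left: "maximal_left_ideal R M \<Longrightarrow> left_ideal R M"
  unfolding maximal_left_ideal_def by (rule conjunct1)

lemma (in ring) J_left:
  assumes "x \<in> jacobson_radical R" "r \<in> carrier R"
  shows "r \<otimes> x \<in> jacobson_radical R"
proof -
  have xc: "x \<in> carrier R" using assms(1) by (rule J_carrier)
  have "r \<otimes> x \<in> M" if "maximal_left_ideal R M" for M
  proof -
    have "x \<in> M" using assms(1) that by (rule J_mem)
    moreover have "left_ideal R M" using that by (rule maximal_left_ideal_left)
    ultimately show ?thesis using assms(2) left_ideal_mult by metis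
  qed
  moreover have "r \<otimes> x \<in> carrier R" using assms(2) xc by simp
  ultimately show ?thesis unfolding jacobson_radical_def by simp
qed

lemma (in ring) J_unit:
  assumes fin: "finite (carrier R)" and x: "x \<in> jacobson_radical R"
  shows "\<exists>a\<in>carrier R. a \<otimes> (\<one> \<ominus> x) = \<one>"
proof (rule ccontr)
  assume nex: "\<not> ?thesis"
  have xc: "x \<in> carrier R" using x by (rule J_carrier)
  define y where "y = \<one> \<ominus> x"
  have yc: "y \<in> carrier R" unfolding y_def using xc by simp
  define L where "L = {a \<otimes> y | a. a \<in> carrier R}"
  have "left_ideal R L"
  proof (rule left_idealI')
    show "L \<subseteq> carrier R" unfolding L_def using yc by auto
    have "\<zero> = \<zero> \<otimes> y" using yc by simp
    then show "\<zero> \<in> L" unfolding L_def by blast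
    fix a b assume "a \<in> L" "b \<in> L"
    then obtain a' b' where "a = a' \<otimes> y" "b = b' \<otimes> y" "a' \<in> carrier R" "b' \<in> carrier R"
      unfolding L_def by blast
    then have "a \<oplus> b = (a' \<oplus> b') \<otimes> y" "a' \<oplus> b' \<in> carrier R" using yc by (simp_all add: l_distr)
    then show "a \<oplus> b \<in> L" unfolding L_def by blast
  next
    fix r a assume "r \<in> carrier R" "a \<in> L"
    then obtain a' where "a = a' \<otimes> y" "a' \<in> carrier R" unfolding L_def by blast
    then have "r \<otimes> a = (r \<otimes> a') \<otimes> y" "r \<otimes> a' \<in> carrier R" using yc \<open>r \<in> carrier R\<close> by (simp_all add: m_assoc)
    then show "r \<otimes> a \<in> L" unfolding L_def by blast
  qed
  moreover have "\<one> \<notin> L" using nex unfolding L_def y_def by auto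
  then have "L \<noteq> carrier R" by auto
  ultimately obtain M where M: "maximal_left_ideal R M" "L \<subseteq> M"
    using exists_maximal_left_ideal[OF fin] by blast
  have lM: "left_ideal R M" using M(1) by (rule maximal_left_ideal_left)
  have "y = \<one> \<otimes> y" using yc by simp
  then have "y \<in> L" unfolding L_def by blast
  then have "y \<in> M" using M(2) by blast
  moreover have "x \<in> M" using x M(1) by (rule J_mem)
  ultimately have "y \<oplus> x \<in> M" by (rule left_ideal_add[OF lM])
  moreover have "y \<oplus> x = \<one>" unfolding y_def using xc by (simp add: minus_eq a_assoc l_neg)
  ultimately have one: "\<one> \<in> M" by simp
  have "carrier R \<subseteq> M"
  proof
    fix r assume "r \<in> carrier R"
    then have "r \<otimes> \<one> \<in> M" using one by (rule left_ideal_mult[OF lM])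
    then show "r \<in> M" using \<open>r \<in> carrier R\<close> by simp
  qed
  moreover have "M \<subseteq> carrier R" using lM by (rule left_ideal_subset)
  ultimately show False using M(1) unfolding maximal_left_ideal_def by blast
qed


lemma (in ring) cancel_mid:
  assumes "a \<in> carrier R" "c \<in> carrier R" "d \<in> carrier R"
  shows "a \<oplus> c \<ominus> (c \<oplus> d) = a \<ominus> d"
proof -
  have "a \<oplus> c \<ominus> (c \<oplus> d) = a \<oplus> c \<oplus> (\<ominus> c \<oplus> \<ominus> d)"
    using assms by (simp add: minus_eq minus_add)
  also have "\<dots> = a \<oplus> (c \<oplus> \<ominus> c) \<oplus> \<ominus> d" using assms by (simp add: a_assoc)
  also have "\<dots> = a \<ominus> d" using assms by (simp add: r_neg minus_eq)
  finally show ?thesis .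
qed

lemma (in ring) J_nil:
  assumes fin: "finite (carrier R)" and x: "x \<in> jacobson_radical R"
  shows "\<exists>i::nat. x [^] i = \<zero>"
proof -
  have xc: "x \<in> carrier R" using x by (rule J_carrier)
  let ?f = "\<lambda>n::nat. x [^] n"
  have "\<not> inj_on ?f {..card (carrier R)}"
  proof
    assume "inj_on ?f {..card (carrier R)}"
    moreover have "?f ` {..card (carrier R)} \<subseteq> carrier R" using xc by auto
    ultimately have "card {..card (carrier R)} \<le> card (carrier R)"
      using card_inj_on_le fin by blast
    then show False by simp
  qed
  then obtain i j :: nat where ij: "i \<noteq> j" "x [^] i = x [^] j" unfolding inj_on_def by blast
  have "\<exists>i j::nat. i < j \<and> x [^] i = x [^] j"
  proof (cases "i < j")
    case True then show ?thesis using ij by blast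
  next
    case False then have "j < i" using ij by simp
    then show ?thesis using ij by metis
  qed
  then obtain i j :: nat where ij: "i < j" "x [^] i = x [^] j" by blast
  define d where "d = j - i"
  have d: "d > 0" "j = d + i" unfolding d_def using ij by auto
  define y where "y = x [^] d"
  have y: "y \<in> jacobson_radical R"
  proof -
    obtain e where "d = Suc e" using d(1) gr0_implies_Suc by blast
    then have "y = x [^] e \<otimes> x" unfolding y_def by simp
    moreover have "x [^] e \<in> carrier R" using xc by simp
    ultimately show ?thesis using J_left[OF x] by simp
  qed
  have yc: "y \<in> carrier R" unfolding y_def using xc by simp
  obtain a where a: "a \<in> carrier R" "a \<otimes> (\<one> \<ominus> y) = \<one>" using J_unit[OF fin y] by blast
  have xi: "x [^] i \<in> carrier R" using xc by simp
  have "y \<otimes> x [^] i = x [^] j" unfolding y_def d(2) using xc by (simp add: nat_pow_mult)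
  then have "x [^] i = y \<otimes> x [^] i" using ij(2) by simp
  then have "(\<one> \<ominus> y) \<otimes> x [^] i = \<zero>" using yc xi
    by (simp add: minus_eq l_distr l_minus r_neg)
  then have "a \<otimes> (\<one> \<ominus> y) \<otimes> x [^] i = \<zero>" using a(1) yc xi by (simp add: m_assoc)
  then have "x [^] i = \<zero>" using a(2) xi by simp
  then show ?thesis by blast
qed

lemma (in ring) nil_in_J:
  assumes xc: "x \<in> carrier R"
    and nil: "\<And>r. r \<in> carrier R \<Longrightarrow> (r \<otimes> x) \<otimes> (r \<otimes> x) \<otimes> (r \<otimes> x) = \<zero>"
  shows "x \<in> jacobson_radical R"
proof -
  have "x \<in> M" if M: "maximal_left_ideal R M" for M
  proof (rule ccontr)
    assume xM: "x \<notin> M"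
    have lM: "left_ideal R M" using M by (rule maximal_left_ideal_left)
    have Mc: "M \<subseteq> carrier R" using lM by (rule left_ideal_subset)
    define M' where "M' = {m \<oplus> r \<otimes> x | m r. m \<in> M \<and> r \<in> carrier R}"
    have lM': "left_ideal R M'"
    proof (rule left_idealI')
      show "M' \<subseteq> carrier R" unfolding M'_def using Mc xc by auto
      have "\<zero> = \<zero> \<oplus> \<zero> \<otimes> x" using xc by simp
      moreover have "\<zero> \<in> M" using lM by (rule left_ideal_zero)
      ultimately show "\<zero> \<in> M'" unfolding M'_def by blast
    next
      fix a b assume "a \<in> M'" "b \<in> M'"
      then obtain m1 r1 m2 r2 where ab: "a = m1 \<oplus> r1 \<otimes> x" "b = m2 \<oplus> r2 \<otimes> x"
        "m1 \<in> M" "r1 \<in> carrier R" "m2 \<in> M" "r2 \<in> carrier R"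
        unfolding M'_def by blast
      have c: "m1 \<in> carrier R" "m2 \<in> carrier R" using ab Mc by auto
      have "a \<oplus> b = (m1 \<oplus> m2) \<oplus> (r1 \<oplus> r2) \<otimes> x"
        using ab c xc by (simp add: l_distr a_ac)
      moreover have "m1 \<oplus> m2 \<in> M" using ab(3,5) by (rule left_ideal_add[OF lM])
      moreover have "r1 \<oplus> r2 \<in> carrier R" using ab by simp
      ultimately show "a \<oplus> b \<in> M'" unfolding M'_def by blast
    next
      fix r a assume r: "r \<in> carrier R" and "a \<in> M'"
      then obtain m1 r1 where ab: "a = m1 \<oplus> r1 \<otimes> x" "m1 \<in> M" "r1 \<in> carrier R"
        unfolding M'_def by blast
      have c: "m1 \<in> carrier R" using ab Mc by auto
      have "r \<otimes> a = r \<otimes> m1 \<oplus> (r \<otimes> r1) \<otimes> x"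
        using ab c xc r by (simp add: r_distr m_assoc)
      moreover have "r \<otimes> m1 \<in> M" using r ab(2) by (rule left_ideal_mult[OF lM])
      moreover have "r \<otimes> r1 \<in> carrier R" using ab r by simp
      ultimately show "r \<otimes> a \<in> M'" unfolding M'_def by blast
    qed
    have "M \<subseteq> M'"
    proof
      fix m assume "m \<in> M"
      moreover have "m = m \<oplus> \<zero> \<otimes> x" using \<open>m \<in> M\<close> Mc xc by auto
      ultimately show "m \<in> M'" unfolding M'_def by blast
    qed
    moreover have "x \<in> M'"
    proof -
      have "x = \<zero> \<oplus> \<one> \<otimes> x" using xc by simp
      moreover have "\<zero> \<in> M" using lM by (rule left_ideal_zero)
      ultimately show ?thesis unfolding M'_def by blast
    qed
    ultimately have "M' = carrier R" using M lM' xM unfolding maximal_left_ideal_def by blast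
    then have "\<one> \<in> M'" by simp
    then obtain m r where mr: "\<one> = m \<oplus> r \<otimes> x" "m \<in> M" "r \<in> carrier R"
      unfolding M'_def by blast
    have mc: "m \<in> carrier R" using mr Mc by auto
    define b where "b = r \<otimes> x"
    have bc: "b \<in> carrier R" unfolding b_def using mr xc by simp
    have b3: "b \<otimes> b \<otimes> b = \<zero>" unfolding b_def using nil mr(3) .
    have m: "m = \<one> \<ominus> b" using mr(1) mc bc unfolding b_def[symmetric]
      by (simp add: minus_eq a_assoc r_neg)
    define u where "u = \<one> \<oplus> b \<oplus> b \<otimes> b"
    have uc: "u \<in> carrier R" unfolding u_def using bc by simp
    define c where "c = b \<oplus> b \<otimes> b"
    have cc: "c \<in> carrier R" unfolding c_def using bc by simp
    have e1: "u \<otimes> m = u \<ominus> u \<otimes> b" unfolding m using uc bc by (simp add: r_minus minus_eq r_distr)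
    have e2: "u \<otimes> b = c \<oplus> b \<otimes> b \<otimes> b" unfolding u_def c_def using bc by (simp add: l_distr)
    have e3: "u = \<one> \<oplus> c" unfolding u_def c_def using bc by (simp add: a_assoc)
    have "u \<otimes> m = u \<ominus> (c \<oplus> b \<otimes> b \<otimes> b)" using e1 e2 by simp
    also have "\<dots> = \<one> \<oplus> c \<ominus> (c \<oplus> b \<otimes> b \<otimes> b)" using e3 by simp
    also have "\<dots> = \<one> \<ominus> b \<otimes> b \<otimes> b" by (rule cancel_mid) (use bc cc in simp_all)
    finally have "u \<otimes> m = \<one> \<ominus> b \<otimes> b \<otimes> b" .
    then have "u \<otimes> m = \<one>" using b3 by (simp add: minus_eq)
    moreover have "u \<otimes> m \<in> M" using uc mr(2) by (rule left_ideal_mult[OF lM])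
    ultimately have one: "\<one> \<in> M" by simp
    have "carrier R \<subseteq> M"
    proof
      fix r assume "r \<in> carrier R"
      then have "r \<otimes> \<one> \<in> M" using one by (rule left_ideal_mult[OF lM])
      then show "r \<in> M" using \<open>r \<in> carrier R\<close> by simp
    qed
    then show False using M Mc unfolding maximal_left_ideal_def by blast
  qed
  then show ?thesis unfolding jacobson_radical_def using xc by blast
qed

definition cube1 :: "('g,'m) monoid_scheme \<Rightarrow> 'g set" where
  "cube1 G = {g \<in> carrier G. g [^]\<^bsub>G\<^esub> (3::nat) = \<one>\<^bsub>G\<^esub>}"

lemma orbit_sum_zero:
  fixes f :: "'b \<Rightarrow> 'a::comm_ring_1"
  assumes "finite D" "\<And>u. u \<in> D \<Longrightarrow> \<rho> u \<in> D" "\<And>u. u \<in> D \<Longrightarrow> \<rho> (\<rho> (\<rho> u)) = u"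
    "\<And>u. u \<in> D \<Longrightarrow> \<rho> u \<noteq> u" "\<And>u. u \<in> D \<Longrightarrow> f (\<rho> u) = f u" "(3::'a) = 0"
  shows "sum f D = 0"
  using assms(1-5)
proof (induction "card D" arbitrary: D rule: less_induct)
  case less
  show ?case
  proof (cases "D = {}")
    case True then show ?thesis by simp
  next
    case False
    then obtain u where u: "u \<in> D" by blast
    define Orb where "Orb = {u, \<rho> u, \<rho> (\<rho> u)}"
    have d1: "\<rho> u \<noteq> u" using less.prems(4) u by blast
    have d2: "\<rho> (\<rho> u) \<noteq> \<rho> u" using less.prems(4) less.prems(2) u by blast
    have d3: "\<rho> (\<rho> u) \<noteq> u"
    proof
      assume "\<rho> (\<rho> u) = u"
      then have "\<rho> (\<rho> (\<rho> u)) = \<rho> u" by simp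
      then show False using less.prems(3)[OF u] d1 by simp
    qed
    have OrbD: "Orb \<subseteq> D" unfolding Orb_def using u less.prems(2) by auto
    have fO: "f (\<rho> u) = f u" "f (\<rho> (\<rho> u)) = f u"
      using less.prems(5) less.prems(2) u by auto
    have "sum f Orb = f u + f u + f u" unfolding Orb_def using d1 d2 d3 fO by (simp add: add.assoc)
    also have "\<dots> = 3 * f u" by (simp add: algebra_simps)
    also have "\<dots> = 0" using assms(6) by simp
    finally have sOrb: "sum f Orb = 0" .
    have cl: "\<rho> v \<in> D - Orb" if "v \<in> D - Orb" for v
    proof -
      have vD: "v \<in> D" "v \<notin> Orb" using that by auto
      have "\<rho> v \<in> D" using less.prems(2) vD by blast
      moreover have "\<rho> v \<notin> Orb"
      proof
        assume "\<rho> v \<in> Orb"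
        then consider "\<rho> v = u" | "\<rho> v = \<rho> u" | "\<rho> v = \<rho> (\<rho> u)" unfolding Orb_def by blast
        then have "v \<in> Orb"
        proof cases
          case 1
          then have "\<rho> (\<rho> (\<rho> v)) = \<rho> (\<rho> u)" by simp
          then show ?thesis using less.prems(3)[OF vD(1)] unfolding Orb_def by simp
        next
          case 2
          then have "\<rho> (\<rho> (\<rho> v)) = \<rho> (\<rho> (\<rho> u))" by simp
          then show ?thesis using less.prems(3)[OF vD(1)] less.prems(3)[OF u] unfolding Orb_def by simp
        next
          case 3
          then have "\<rho> (\<rho> (\<rho> v)) = \<rho> (\<rho> (\<rho> (\<rho> u)))" by simp
          then show ?thesis using less.prems(3)[OF vD(1)] less.prems(3)[OF u] unfolding Orb_def by simp
        qed
        then show False using vD by blast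
      qed
      ultimately show ?thesis by blast
    qed
    have "card (D - Orb) < card D"
      using u OrbD less.prems(1) unfolding Orb_def by (intro psubset_card_mono) auto
    then have s2: "sum f (D - Orb) = 0"
      using less.hyps[of "D - Orb"] less.prems cl by auto
    have "sum f D = sum f (D - Orb) + sum f Orb"
      using OrbD less.prems(1) by (rule sum.subset_diff)
    then show ?thesis using sOrb s2 by simp
  qed
qed

lemma frob_sum:
  fixes f :: "'b \<Rightarrow> 'a::comm_ring_1"
  assumes "(3::'a) = 0"
  shows "(\<Sum>x\<in>S. f x) ^ 3 = (\<Sum>x\<in>S. f x ^ 3)"
proof (cases "finite S")
  case True
  then show ?thesis
  proof (induction S rule: finite_induct)
    case empty then show ?case by simp
  next
    case (insert x F)
    have e: "(a + b) ^ 3 = a ^ 3 + b ^ 3 + 3 * (a * a * b + a * b * b)" for a b :: 'a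
      by (simp add: power3_eq_cube algebra_simps numeral_3_eq_3)
    show ?case using insert by (simp add: e assms)
  qed
next
  case False then show ?thesis by simp
qed


lemma (in group) pow3: "x \<in> carrier G \<Longrightarrow> x [^] (3::nat) = x \<otimes> x \<otimes> x"
  by (simp add: numeral_3_eq_3)

lemma (in group) cube1_swap:
  assumes "a \<in> carrier G" "b \<in> carrier G"
  shows "(a \<otimes> b \<in> cube1 G) = (b \<otimes> a \<in> cube1 G)"
proof -
  define v where "v = b \<otimes> a \<otimes> b \<otimes> a \<otimes> b"
  have vc: "v \<in> carrier G" unfolding v_def using assms by simp
  have e1: "(a \<otimes> b) [^] (3::nat) = a \<otimes> v" unfolding v_def using assms by (simp add: pow3 m_assoc)
  have e2: "(b \<otimes> a) [^] (3::nat) = v \<otimes> a" unfolding v_def using assms by (simp add: pow3 m_assoc)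
  have "(a \<otimes> v = \<one>) = (v \<otimes> a = \<one>)" using assms vc inv_comm by blast
  then show ?thesis unfolding cube1_def using e1 e2 assms by simp
qed

lemma (in group) cube1_inv:
  assumes "w \<in> carrier G"
  shows "(inv w \<in> cube1 G) = (w \<in> cube1 G)"
proof -
  have "inv w [^] (3::nat) = inv (w [^] (3::nat))" using assms by (rule nat_pow_inv)
  moreover have "(inv (w [^] (3::nat)) = \<one>) = (w [^] (3::nat) = \<one>)"
    using assms by simp
  ultimately show ?thesis unfolding cube1_def using assms by simp
qed

lemma (in group) cube1_cube:
  assumes h9: "\<And>g. g \<in> carrier G \<Longrightarrow> g [^] (9::nat) = \<one> \<Longrightarrow> g [^] (3::nat) = \<one>"
    and x: "x \<in> carrier G"
  shows "(x \<otimes> x \<otimes> x \<in> cube1 G) = (x \<in> cube1 G)"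
proof -
  have "(x \<otimes> x \<otimes> x) [^] (3::nat) = x [^] (9::nat)"
    using x by (simp add: pow3[symmetric] nat_pow_pow)
  moreover have "x [^] (3::nat) = \<one> \<Longrightarrow> x [^] (9::nat) = \<one>"
  proof -
    assume "x [^] (3::nat) = \<one>"
    moreover have "x [^] (9::nat) = (x [^] (3::nat)) [^] (3::nat)" using x by (simp add: nat_pow_pow)
    ultimately show ?thesis by simp
  qed
  ultimately show ?thesis unfolding cube1_def using x h9 by (auto simp: pow3[symmetric])
qed


lemma (in group) rc1: "x \<in> carrier G \<Longrightarrow> y \<in> carrier G \<Longrightarrow> inv x \<otimes> (x \<otimes> y) = y"
  by (simp add: m_assoc[symmetric])
lemma (in group) rc2: "x \<in> carrier G \<Longrightarrow> y \<in> carrier G \<Longrightarrow> x \<otimes> (inv x \<otimes> y) = y"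
  by (simp add: m_assoc[symmetric])

lemma phi_cube:
  fixes G :: "('g,'m) monoid_scheme" (structure) and z :: "'g \<Rightarrow> 'a::field"
  assumes grp: "group G" and fin: "finite (carrier G)"
    and h9: "\<And>g. g \<in> carrier G \<Longrightarrow> g [^] (9::nat) = \<one> \<Longrightarrow> g [^] (3::nat) = \<one>"
    and three: "(3::'a) = 0"
    and z: "z \<in> carrier (group_algebra G)"
  shows "(\<Sum>a\<in>cube1 G. (z \<otimes>\<^bsub>group_algebra G\<^esub> z \<otimes>\<^bsub>group_algebra G\<^esub> z) a) = (\<Sum>a\<in>cube1 G. z a) ^ 3"
proof -
  interpret group G by (rule grp)
  let ?C = "carrier G" and ?P = "cube1 G"
  have Pdef: "?P = {a \<in> ?C. a [^] (3::nat) = \<one>}" unfolding cube1_def ..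
  have PC: "?P \<subseteq> ?C" unfolding Pdef by auto
  define F where "F x y w = (if x \<otimes> y \<otimes> w \<in> ?P then z x * z y * z w else 0)" for x y w
  define H where "H x p a = (if a \<in> ?P then z x * z (inv x \<otimes> p) * z (inv p \<otimes> a) else 0)" for x p a
  have step1: "(\<Sum>y\<in>?C. \<Sum>w\<in>?C. F x y w) = (\<Sum>p\<in>?C. \<Sum>a\<in>?C. H x p a)" if x: "x \<in> ?C" for x
  proof -
    have h1: "(\<Sum>w\<in>?C. F x y w) = (\<Sum>a\<in>?C. if a \<in> ?P then z x * z y * z (inv (x \<otimes> y) \<otimes> a) else 0)"
      if y: "y \<in> ?C" for y
      by (rule sum.reindex_bij_witness[where i = "\<lambda>a. inv (x \<otimes> y) \<otimes> a" and j = "\<lambda>w. x \<otimes> y \<otimes> w"])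
         (use x y in \<open>auto simp: F_def m_assoc inv_mult_group rc1 rc2\<close>)
    have "(\<Sum>y\<in>?C. \<Sum>w\<in>?C. F x y w)
        = (\<Sum>y\<in>?C. \<Sum>a\<in>?C. if a \<in> ?P then z x * z y * z (inv (x \<otimes> y) \<otimes> a) else 0)"
      using h1 by (rule sum.cong[OF refl])
    also have "\<dots> = (\<Sum>p\<in>?C. \<Sum>a\<in>?C. H x p a)"
      by (rule sum.reindex_bij_witness[where i = "\<lambda>p. inv x \<otimes> p" and j = "\<lambda>y. x \<otimes> y"])
         (use x in \<open>auto simp: H_def rc1 rc2 cong: if_cong\<close>)
    finally show ?thesis .
  qed
  have T1: "(\<Sum>x\<in>?C. \<Sum>y\<in>?C. \<Sum>w\<in>?C. F x y w) = (\<Sum>a\<in>?P. (z \<otimes>\<^bsub>group_algebra G\<^esub> z \<otimes>\<^bsub>group_algebra G\<^esub> z) a)"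
  proof -
    have "(\<Sum>x\<in>?C. \<Sum>y\<in>?C. \<Sum>w\<in>?C. F x y w) = (\<Sum>x\<in>?C. \<Sum>p\<in>?C. \<Sum>a\<in>?C. H x p a)"
      using step1 by (rule sum.cong[OF refl])
    also have "\<dots> = (\<Sum>p\<in>?C. \<Sum>x\<in>?C. \<Sum>a\<in>?C. H x p a)" by (rule sum.swap)
    also have "\<dots> = (\<Sum>p\<in>?C. \<Sum>a\<in>?C. \<Sum>x\<in>?C. H x p a)" by (rule sum.cong[OF refl], rule sum.swap)
    also have "\<dots> = (\<Sum>a\<in>?C. \<Sum>p\<in>?C. \<Sum>x\<in>?C. H x p a)" by (rule sum.swap)
    also have "\<dots> = (\<Sum>a\<in>?C. if a \<in> ?P then (\<Sum>p\<in>?C. (\<Sum>x\<in>?C. z x * z (inv x \<otimes> p)) * z (inv p \<otimes> a)) else 0)"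
      by (intro sum.cong refl) (simp add: H_def sum_distrib_right)
    also have "\<dots> = (\<Sum>a\<in>?P. (\<Sum>p\<in>?C. (\<Sum>x\<in>?C. z x * z (inv x \<otimes> p)) * z (inv p \<otimes> a)))"
      unfolding Pdef using fin by (simp add: sum.inter_filter)
    also have "\<dots> = (\<Sum>a\<in>?P. (z \<otimes>\<^bsub>group_algebra G\<^esub> z \<otimes>\<^bsub>group_algebra G\<^esub> z) a)"
      using PC by (intro sum.cong refl) (auto simp: ga_mult)
    finally show ?thesis .
  qed
  define f where "f u = F (fst u) (fst (snd u)) (snd (snd u))" for u
  define D where "D = ?C \<times> (?C \<times> ?C)"
  have T2: "(\<Sum>x\<in>?C. \<Sum>y\<in>?C. \<Sum>w\<in>?C. F x y w) = sum f D"
    unfolding D_def f_def by (simp add: sum.cartesian_product case_prod_beta')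
  define Fx where "Fx = (\<lambda>x. (x, (x, x))) ` ?C"
  have FxD: "Fx \<subseteq> D" unfolding Fx_def D_def by auto
  have finD: "finite D" unfolding D_def using fin by simp
  have sD: "sum f D = sum f (D - Fx) + sum f Fx" using FxD finD by (rule sum.subset_diff)
  define rho where "rho u = (fst (snd u), (snd (snd u), fst u))" for u :: "'g \<times> 'g \<times> 'g"
  have "sum f (D - Fx) = 0"
  proof (rule orbit_sum_zero[where \<rho> = rho])
    show "finite (D - Fx)" using finD by simp
    show "(3::'a) = 0" by (rule three)
  next
    fix u assume u: "u \<in> D - Fx"
    obtain x y w where uu: "u = (x, (y, w))" by (cases u) auto
    have c: "x \<in> ?C" "y \<in> ?C" "w \<in> ?C" using u uu unfolding D_def by auto
    have nf: "\<not> (x = y \<and> y = w)" using u uu c unfolding Fx_def by auto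
    show "rho u \<in> D - Fx" using uu c nf unfolding D_def Fx_def rho_def by auto
    show "rho (rho (rho u)) = u" using uu by (simp add: rho_def)
    show "rho u \<noteq> u" using uu nf by (auto simp: rho_def)
    have "(x \<otimes> (y \<otimes> w) \<in> ?P) = ((y \<otimes> w) \<otimes> x \<in> ?P)" using c by (intro cube1_swap) auto
    then have "(x \<otimes> y \<otimes> w \<in> ?P) = (y \<otimes> w \<otimes> x \<in> ?P)" using c by (simp add: m_assoc)
    then show "f (rho u) = f u"
      unfolding f_def F_def uu rho_def by (simp add: mult_ac)
  qed
  moreover have "sum f Fx = (\<Sum>x\<in>?P. z x ^ 3)"
  proof -
    have "sum f Fx = (\<Sum>x\<in>?C. f (x, (x, x)))"
      unfolding Fx_def by (subst sum.reindex) (auto simp: inj_on_def)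
    also have "\<dots> = (\<Sum>x\<in>?C. if x \<in> ?P then z x ^ 3 else 0)"
      by (intro sum.cong refl) (simp add: f_def F_def cube1_cube[OF h9] power3_eq_cube)
    also have "\<dots> = (\<Sum>x\<in>?P. z x ^ 3)"
      unfolding Pdef using fin by (simp add: sum.inter_filter)
    finally show ?thesis .
  qed
  ultimately have "sum f D = (\<Sum>x\<in>?P. z x ^ 3)" using sD by simp
  also have "\<dots> = (\<Sum>x\<in>?P. z x) ^ 3" using three by (simp add: frob_sum)
  finally show ?thesis using T1 T2 by simp
qed


lemma ga_finite:
  assumes "finite (carrier G)"
  shows "finite (carrier (group_algebra G :: ('g \<Rightarrow> 'a::{finite,field}) ring))"
proof -
  have "carrier (group_algebra G :: ('g \<Rightarrow> 'a) ring)
      = {f. \<forall>x. (x \<in> carrier G \<longrightarrow> f x \<in> (UNIV::'a set)) \<and> (x \<notin> carrier G \<longrightarrow> f x = 0)}"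
    by (auto simp: ga_carrier)
  then show ?thesis using finite_set_of_finite_funs[OF assms finite_UNIV] by simp
qed

lemma J_ann:
  fixes G :: "('g,'m) monoid_scheme" (structure) and \<alpha> :: "'g \<Rightarrow> 'a::{finite,field}"
  assumes grp: "group G" and fin: "finite (carrier G)"
    and h9: "\<And>g. g \<in> carrier G \<Longrightarrow> g [^] (9::nat) = \<one> \<Longrightarrow> g [^] (3::nat) = \<one>"
    and three: "(3::'a) = 0"
    and J: "\<alpha> \<in> jacobson_radical (group_algebra G :: ('g \<Rightarrow> 'a) ring)"
    and s: "s = (\<lambda>g. if g \<in> cube1 G then (1::'a) else 0)"
  shows "\<alpha> \<otimes>\<^bsub>group_algebra G\<^esub> s = \<zero>\<^bsub>group_algebra G\<^esub> \<and> s \<otimes>\<^bsub>group_algebra G\<^esub> \<alpha> = \<zero>\<^bsub>group_algebra G\<^esub>"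
proof -
  interpret group G by (rule grp)
  let ?A = "group_algebra G :: ('g \<Rightarrow> 'a) ring"
  let ?C = "carrier G" and ?P = "cube1 G"
  interpret R: ring ?A using ga_ring[OF grp fin] .
  have finA: "finite (carrier ?A)" using ga_finite[OF fin] .
  have \<alpha>c: "\<alpha> \<in> carrier ?A" using J by (rule R.J_carrier)
  have PC: "?P \<subseteq> ?C" unfolding cube1_def by auto
  have key: "(\<Sum>w\<in>?P. \<alpha> (g \<otimes> w)) = 0" if g: "g \<in> ?C" for g
  proof -
    define \<delta> where "\<delta> = (\<lambda>x. if x = inv g then (1::'a) else 0)"
    have \<delta>c: "\<delta> \<in> carrier ?A" unfolding \<delta>_def using g by (auto simp: ga_carrier)
    define zz where "zz = \<delta> \<otimes>\<^bsub>?A\<^esub> \<alpha>"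
    have zzJ: "zz \<in> jacobson_radical ?A" unfolding zz_def using J \<delta>c by (rule R.J_left)
    have zzc: "zz \<in> carrier ?A" using zzJ by (rule R.J_carrier)
    have zzx: "zz x = \<alpha> (g \<otimes> x)" if x: "x \<in> ?C" for x
    proof -
      have "zz x = (\<Sum>p\<in>?C. (if p = inv g then 1 else 0) * \<alpha> (inv p \<otimes> x))"
        unfolding zz_def \<delta>_def using x by (simp add: ga_mult)
      also have "\<dots> = \<alpha> (inv (inv g) \<otimes> x)" using g fin by (simp add: if10_mult sum.delta)
      finally show ?thesis using g by simp
    qed
    obtain i :: nat where i: "zz [^]\<^bsub>?A\<^esub> i = \<zero>\<^bsub>?A\<^esub>" using R.J_nil[OF finA zzJ] by blast
    define \<phi> where "\<phi> w = (\<Sum>a\<in>?P. w a)" for w :: "'g \<Rightarrow> 'a"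
    have pw: "\<phi> (zz [^]\<^bsub>?A\<^esub> ((3::nat) ^ k)) = \<phi> zz ^ (3 ^ k)" for k
    proof (induction k)
      case 0 then show ?case using zzc by simp
    next
      case (Suc k)
      define w where "w = zz [^]\<^bsub>?A\<^esub> ((3::nat) ^ k)"
      have wc: "w \<in> carrier ?A" unfolding w_def using zzc by simp
      have "zz [^]\<^bsub>?A\<^esub> ((3::nat) ^ Suc k) = w [^]\<^bsub>?A\<^esub> (3::nat)"
        unfolding w_def using zzc by (simp add: R.nat_pow_pow mult.commute)
      also have "\<dots> = w \<otimes>\<^bsub>?A\<^esub> w \<otimes>\<^bsub>?A\<^esub> w" using wc by (simp add: numeral_3_eq_3)
      finally have "\<phi> (zz [^]\<^bsub>?A\<^esub> ((3::nat) ^ Suc k)) = \<phi> w ^ 3"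
        unfolding \<phi>_def using phi_cube[OF grp fin h9 three wc] by simp
      also have "\<dots> = (\<phi> zz ^ (3 ^ k)) ^ 3" using Suc unfolding w_def by simp
      also have "\<dots> = \<phi> zz ^ (3 ^ Suc k)" by (simp add: power_mult[symmetric] mult.commute)
      finally show ?case .
    qed
    have "i \<le> 3 ^ i" using less_exp[of i] by simp
    then have "zz [^]\<^bsub>?A\<^esub> ((3::nat) ^ i) = zz [^]\<^bsub>?A\<^esub> ((3::nat) ^ i - i) \<otimes>\<^bsub>?A\<^esub> zz [^]\<^bsub>?A\<^esub> i"
      using zzc by (simp add: R.nat_pow_mult)
    also have "\<dots> = \<zero>\<^bsub>?A\<^esub>" using i zzc by simp
    finally have "\<phi> zz ^ (3 ^ i) = 0" using pw[of i] unfolding \<phi>_def by (simp add: ga_zero)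
    then have "\<phi> zz = 0" by simp
    moreover have "\<phi> zz = (\<Sum>w\<in>?P. \<alpha> (g \<otimes> w))" unfolding \<phi>_def using PC zzx by (intro sum.cong) auto
    ultimately show ?thesis by simp
  qed
  have s1: "(\<alpha> \<otimes>\<^bsub>?A\<^esub> s) g = (\<Sum>w\<in>?P. \<alpha> (g \<otimes> w))" if g: "g \<in> ?C" for g
  proof -
    have e0: "(\<alpha> \<otimes>\<^bsub>?A\<^esub> s) g = (\<Sum>p\<in>?C. \<alpha> p * s (inv p \<otimes> g))" using g by (simp add: ga_mult)
    have iv: "(inv p \<otimes> g \<in> ?P) = (inv g \<otimes> p \<in> ?P)" if p: "p \<in> ?C" for p
      using cube1_inv[of "inv g \<otimes> p"] g p by (simp add: inv_mult_group)
    have e1: "(\<Sum>p\<in>?C. \<alpha> p * s (inv p \<otimes> g)) = (\<Sum>w\<in>?C. if w \<in> ?P then \<alpha> (g \<otimes> w) else 0)"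
      by (rule sum.reindex_bij_witness[where i = "\<lambda>w. g \<otimes> w" and j = "\<lambda>p. inv g \<otimes> p"])
         (use g in \<open>auto simp: s m_assoc inv_mult_group rc1 rc2 iv\<close>)
    have e2: "(\<Sum>w\<in>?C. if w \<in> ?P then \<alpha> (g \<otimes> w) else 0) = (\<Sum>w\<in>?P. \<alpha> (g \<otimes> w))"
      unfolding cube1_def using fin by (simp add: sum.inter_filter)
    show ?thesis using e0 e1 e2 by simp
  qed
  have s2: "(s \<otimes>\<^bsub>?A\<^esub> \<alpha>) g = (\<Sum>w\<in>?P. \<alpha> (g \<otimes> w))" if g: "g \<in> ?C" for g
  proof -
    have "(s \<otimes>\<^bsub>?A\<^esub> \<alpha>) g = (\<Sum>p\<in>?C. s p * \<alpha> (inv p \<otimes> g))" using g by (simp add: ga_mult)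
    also have "\<dots> = (\<Sum>w\<in>?C. if w \<in> ?P then \<alpha> (g \<otimes> w) else 0)"
    proof (rule sum.reindex_bij_witness[where i = "\<lambda>w. g \<otimes> inv w \<otimes> inv g" and j = "\<lambda>p. inv g \<otimes> inv p \<otimes> g"])
      fix p assume p: "p \<in> ?C"
      have "(g \<otimes> (inv (inv g \<otimes> inv p \<otimes> g) \<otimes> inv g) \<in> ?P) = ((inv (inv g \<otimes> inv p \<otimes> g) \<otimes> inv g) \<otimes> g \<in> ?P)"
        using g p by (intro cube1_swap) auto
      moreover have "(inv (inv g \<otimes> inv p \<otimes> g) \<otimes> inv g) \<otimes> g = inv (inv g \<otimes> inv p \<otimes> g)"
        using g p by (simp add: m_assoc)
      moreover have "g \<otimes> (inv (inv g \<otimes> inv p \<otimes> g) \<otimes> inv g) = p"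
        using g p by (simp add: m_assoc inv_mult_group rc1 rc2)
      ultimately have "(p \<in> ?P) = (inv g \<otimes> inv p \<otimes> g \<in> ?P)" using g p cube1_inv by simp
      moreover have "g \<otimes> (inv g \<otimes> inv p \<otimes> g) = inv p \<otimes> g" using g p by (simp add: m_assoc rc2)
      ultimately show "(if inv g \<otimes> inv p \<otimes> g \<in> ?P then \<alpha> (g \<otimes> (inv g \<otimes> inv p \<otimes> g)) else 0) = s p * \<alpha> (inv p \<otimes> g)"
        by (simp add: s)
    qed (use g in \<open>auto simp: m_assoc inv_mult_group rc1 rc2\<close>)
    also have "\<dots> = (\<Sum>w\<in>?P. \<alpha> (g \<otimes> w))"
      unfolding cube1_def using fin by (simp add: sum.inter_filter)
    finally show ?thesis .
  qed
  have "\<alpha> \<otimes>\<^bsub>?A\<^esub> s = \<zero>\<^bsub>?A\<^esub>"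
  proof (rule ext)
    fix g show "(\<alpha> \<otimes>\<^bsub>?A\<^esub> s) g = \<zero>\<^bsub>?A\<^esub> g"
      by (cases "g \<in> ?C") (simp add: s1 key ga_zero, simp add: ga_mult ga_zero)
  qed
  moreover have "s \<otimes>\<^bsub>?A\<^esub> \<alpha> = \<zero>\<^bsub>?A\<^esub>"
  proof (rule ext)
    fix g show "(s \<otimes>\<^bsub>?A\<^esub> \<alpha>) g = \<zero>\<^bsub>?A\<^esub> g"
      by (cases "g \<in> ?C") (simp add: s2 key ga_zero, simp add: ga_mult ga_zero)
  qed
  ultimately show ?thesis by simp
qed

lemma T_carrier: "carrier (T_grp m t) = {0..<m} \<times> {0..<3}"
  by (simp add: T_grp_def)

lemma T_mult: "(a, b) \<otimes>\<^bsub>T_grp m t\<^esub> (c, d) = ((a + c * t ^ (2 * nat b)) mod m, (b + d) mod 3)"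
  by (simp add: T_grp_def)

lemma T_one: "\<one>\<^bsub>T_grp m t\<^esub> = (0, 0)"
  by (simp add: T_grp_def)

lemma tpow:
  fixes m t :: int
  assumes "t ^ 3 mod m = 1 mod m"
  shows "t ^ n mod m = t ^ (n mod 3) mod m"
proof -
  define q where "q = n div 3"
  define r where "r = t ^ (n mod 3)"
  have "t ^ n = t ^ (3 * q + n mod 3)" unfolding q_def by simp
  also have "\<dots> = (t ^ 3) ^ q * r" unfolding r_def by (simp only: power_add power_mult)
  finally have e: "t ^ n = (t ^ 3) ^ q * r" .
  have h1: "((t ^ 3) ^ q * r) mod m = (((t ^ 3) ^ q mod m) * r) mod m" by (rule mod_mult_left_eq[symmetric])
  have "(t ^ 3) ^ q mod m = ((t ^ 3 mod m) ^ q) mod m" by (rule power_mod[symmetric])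
  also have "\<dots> = ((1 mod m) ^ q) mod m" using assms by simp
  also have "\<dots> = (1 ^ q) mod m" by (rule power_mod)
  finally have h2: "(t ^ 3) ^ q mod m = 1 mod m" by simp
  have h3: "((1 mod m) * r) mod m = r mod m" using mod_mult_left_eq[of 1 m r] by simp
  show ?thesis using e h1 h2 h3 unfolding r_def by simp
qed

lemma modh1: "((u::int) + e * (w mod m)) mod m = (u + e * w) mod m"
  by (metis mod_add_right_eq mod_mult_right_eq)

lemma modh2: "((u::int) + (w mod m) * e) mod m = (u + w * e) mod m"
  by (metis mod_add_right_eq mod_mult_left_eq)

lemma T_group:
  fixes m t :: int
  assumes m: "m > 0" and t3: "t ^ 3 mod m = 1 mod m"
  shows "group (T_grp m t)"
proof (rule groupI)
  fix x y assume "x \<in> carrier (T_grp m t)" "y \<in> carrier (T_grp m t)"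
  then show "x \<otimes>\<^bsub>T_grp m t\<^esub> y \<in> carrier (T_grp m t)"
    using m by (cases x, cases y) (simp add: T_carrier T_mult)
next
  show "\<one>\<^bsub>T_grp m t\<^esub> \<in> carrier (T_grp m t)" using m by (simp add: T_carrier T_one)
next
  fix x assume "x \<in> carrier (T_grp m t)"
  then show "\<one>\<^bsub>T_grp m t\<^esub> \<otimes>\<^bsub>T_grp m t\<^esub> x = x"
    by (cases x) (simp add: T_carrier T_one T_mult)
next
  fix x assume x: "x \<in> carrier (T_grp m t)"
  obtain c d where xcd: "x = (c, d)" by (cases x)
  define b where "b = (3 - d) mod 3"
  define a where "a = (- c * t ^ (2 * nat b)) mod m"
  have "(a, b) \<in> carrier (T_grp m t)" unfolding a_def b_def using m by (simp add: T_carrier)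
  moreover have "(a, b) \<otimes>\<^bsub>T_grp m t\<^esub> x = \<one>\<^bsub>T_grp m t\<^esub>"
    unfolding xcd T_mult T_one a_def b_def by (simp add: mod_add_left_eq)
  ultimately show "\<exists>y\<in>carrier (T_grp m t). y \<otimes>\<^bsub>T_grp m t\<^esub> x = \<one>\<^bsub>T_grp m t\<^esub>" by blast
next
  fix x y z assume xyz: "x \<in> carrier (T_grp m t)" "y \<in> carrier (T_grp m t)" "z \<in> carrier (T_grp m t)"
  obtain a b where x: "x = (a, b)" by (cases x)
  obtain c d where y: "y = (c, d)" by (cases y)
  obtain e f where z: "z = (e, f)" by (cases z)
  have bd: "0 \<le> b" "b < 3" "0 \<le> d" "d < 3" using xyz x y z by (auto simp: T_carrier)
  have n1: "nat ((b + d) mod 3) = (nat b + nat d) mod 3" using bd by (simp add: nat_mod_distrib nat_add_distrib)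
  have p1: "t ^ (2 * nat ((b + d) mod 3)) mod m = (t ^ (2 * nat b) * t ^ (2 * nat d)) mod m"
  proof -
    have "t ^ (2 * nat ((b + d) mod 3)) mod m = t ^ ((2 * nat ((b + d) mod 3)) mod 3) mod m"
      using tpow[OF t3] by blast
    also have "(2 * nat ((b + d) mod 3)) mod 3 = (2 * nat b + 2 * nat d) mod 3"
      unfolding n1 by (simp add: mod_mult_right_eq distrib_left)
    also have "t ^ ((2 * nat b + 2 * nat d) mod 3) mod m = t ^ (2 * nat b + 2 * nat d) mod m"
      using tpow[OF t3] by metis
    finally show ?thesis by (simp add: power_add)
  qed
  have fst_eq: "((a + c * t ^ (2 * nat b)) mod m + e * t ^ (2 * nat ((b + d) mod 3))) mod m
      = (a + (c + e * t ^ (2 * nat d)) mod m * t ^ (2 * nat b)) mod m"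
  proof -
    have "((a + c * t ^ (2 * nat b)) mod m + e * t ^ (2 * nat ((b + d) mod 3))) mod m
        = (a + c * t ^ (2 * nat b) + e * t ^ (2 * nat ((b + d) mod 3))) mod m"
      by (rule mod_add_left_eq)
    also have "\<dots> = (a + c * t ^ (2 * nat b) + e * (t ^ (2 * nat ((b + d) mod 3)) mod m)) mod m"
      by (rule modh1[symmetric])
    also have "\<dots> = (a + c * t ^ (2 * nat b) + e * ((t ^ (2 * nat b) * t ^ (2 * nat d)) mod m)) mod m"
      using p1 by simp
    also have "\<dots> = (a + c * t ^ (2 * nat b) + e * (t ^ (2 * nat b) * t ^ (2 * nat d))) mod m"
      by (rule modh1)
    also have "\<dots> = (a + (c + e * t ^ (2 * nat d)) * t ^ (2 * nat b)) mod m"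
      by (simp add: algebra_simps)
    also have "\<dots> = (a + (c + e * t ^ (2 * nat d)) mod m * t ^ (2 * nat b)) mod m"
      by (rule modh2[symmetric])
    finally show ?thesis .
  qed
  have snd_eq: "((b + d) mod 3 + f) mod 3 = (b + (d + f) mod 3) mod 3"
    using mod_add_left_eq[of "b + d" 3 f] mod_add_right_eq[of b "d + f" 3] by (simp add: add.assoc)
  show "x \<otimes>\<^bsub>T_grp m t\<^esub> y \<otimes>\<^bsub>T_grp m t\<^esub> z = x \<otimes>\<^bsub>T_grp m t\<^esub> (y \<otimes>\<^bsub>T_grp m t\<^esub> z)"
    unfolding x y z T_mult by (simp only: fst_eq snd_eq)
qed


lemma small_dvd:
  fixes a m :: int
  assumes "m dvd a" "0 \<le> a" "a < m" "0 \<le> b" "b < 3"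
  shows "a = 0"
proof (rule ccontr)
  assume "a \<noteq> 0"
  then have "0 < a" using assms(2) by simp
  have "m \<le> a" using assms(1) \<open>0 < a\<close> by (rule zdvd_imp_le)
  then show False using assms(3) by simp
qed

locale Tctx =
  fixes k :: nat and m t :: int
  assumes m_def: "m = 3 * int k + 1" and t3: "t ^ 3 mod m = 1 mod m" and gc: "gcd m (t - 1) = 1"
begin

lemma m_pos: "m > 0" using m_def by simp

lemma grp: "group (T_grp m t)" using T_group[OF m_pos t3] .

lemma dvd3: "m dvd 3 * x \<Longrightarrow> m dvd x"
proof -
  assume "m dvd 3 * x"
  then have "m dvd m * x - int k * (3 * x)" by (simp add: dvd_diff)
  moreover have "m * x - int k * (3 * x) = x" using m_def by (simp add: algebra_simps)
  ultimately show ?thesis by simp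
qed

lemma dvd3n: "m dvd 3 ^ n * x \<Longrightarrow> m dvd x"
proof (induction n)
  case 0 then show ?case by simp
next
  case (Suc n)
  then have "m dvd 3 * (3 ^ n * x)" by (simp add: mult.assoc)
  then show ?case using Suc dvd3 by blast
qed

lemma tt: "m dvd t ^ 2 + t + 1"
proof -
  have "m dvd t ^ 3 - 1" using t3 by (simp add: mod_eq_dvd_iff)
  moreover have "t ^ 3 - 1 = (t ^ 2 + t + 1) * (t - 1)" by (simp add: algebra_simps power3_eq_cube power2_eq_square)
  moreover have "coprime m (t - 1)" using gc by (simp add: coprime_iff_gcd_eq_1)
  ultimately show ?thesis using coprime_dvd_mult_left_iff by metis
qed

lemma tt4: "m dvd 1 + t ^ 2 + t ^ 4"
proof -
  have "m dvd t ^ 3 - 1" using t3 by (simp add: mod_eq_dvd_iff)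
  then have "m dvd (t ^ 2 + t + 1) + t * (t ^ 3 - 1)" using tt by (simp add: dvd_add)
  moreover have "(t ^ 2 + t + 1) + t * (t ^ 3 - 1) = 1 + t ^ 2 + t ^ 4"
    by (simp add: algebra_simps power3_eq_cube power2_eq_square power4_eq_xxxx)
  ultimately show ?thesis by simp
qed

lemma pow0: "(a, 0) [^]\<^bsub>T_grp m t\<^esub> (n::nat) = ((int n * a) mod m, 0)"
proof (induction n)
  case 0 then show ?case by (simp add: T_one)
next
  case (Suc n)
  have "(a, 0) [^]\<^bsub>T_grp m t\<^esub> Suc n = (a, 0) [^]\<^bsub>T_grp m t\<^esub> n \<otimes>\<^bsub>T_grp m t\<^esub> (a, 0)"
    by simp
  also have "\<dots> = (((int n * a) mod m + a) mod m, 0)" unfolding Suc by (simp add: T_mult)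
  also have "((int n * a) mod m + a) mod m = (int n * a + a) mod m" by (rule mod_add_left_eq)
  also have "int n * a + a = int (Suc n) * a" by (simp add: algebra_simps)
  finally show ?case .
qed

lemma cube_b:
  assumes g: "(a, b) \<in> carrier (T_grp m t)" and b: "b \<noteq> 0"
  shows "(a, b) [^]\<^bsub>T_grp m t\<^esub> (3::nat) = \<one>\<^bsub>T_grp m t\<^esub>"
proof -
  interpret group "T_grp m t" by (rule grp)
  have e: "(a, b) [^]\<^bsub>T_grp m t\<^esub> (3::nat) = (a, b) \<otimes>\<^bsub>T_grp m t\<^esub> (a, b) \<otimes>\<^bsub>T_grp m t\<^esub> (a, b)"
    using g by (rule pow3)
  have "b = 1 \<or> b = 2" using g b by (auto simp: T_carrier)
  then have "(a, b) \<otimes>\<^bsub>T_grp m t\<^esub> (a, b) \<otimes>\<^bsub>T_grp m t\<^esub> (a, b) = (0, 0)"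
  proof
    assume b1: "b = 1"
    have "((a + a * t ^ 2) mod m + a * t ^ 4) mod m = (a + a * t ^ 2 + a * t ^ 4) mod m" by (rule mod_add_left_eq)
    also have "\<dots> = (a * (1 + t ^ 2 + t ^ 4)) mod m" by (simp add: algebra_simps)
    also have "\<dots> = 0" using tt4 by simp
    finally show ?thesis unfolding b1 by (simp add: T_mult)
  next
    assume b2: "b = 2"
    have "((a + a * t ^ 4) mod m + a * t ^ 2) mod m = (a + a * t ^ 4 + a * t ^ 2) mod m" by (rule mod_add_left_eq)
    also have "\<dots> = (a * (1 + t ^ 2 + t ^ 4)) mod m" by (simp add: algebra_simps)
    also have "\<dots> = 0" using tt4 by simp
    finally show ?thesis unfolding b2 by (simp add: T_mult)
  qed
  then show ?thesis using e by (simp add: T_one)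
qed

lemma cube1_T:
  assumes g: "g \<in> carrier (T_grp m t)"
  shows "(g \<in> cube1 (T_grp m t)) = (g = (0, 0) \<or> snd g \<noteq> 0)"
proof -
  obtain a b where gab: "g = (a, b)" by (cases g)
  have ab: "0 \<le> a" "a < m" "0 \<le> b" "b < 3" using g gab by (auto simp: T_carrier)
  show ?thesis
  proof (cases "b = 0")
    case True
    have "(a, 0) [^]\<^bsub>T_grp m t\<^esub> (3::nat) = ((3 * a) mod m, 0)" by (simp add: pow0)
    moreover have "((3 * a) mod m = 0) = (a = 0)"
    proof
      assume "(3 * a) mod m = 0"
      then have "m dvd 3 * a" by (simp add: dvd_eq_mod_eq_0)
      then have "m dvd a" by (rule dvd3)
      then show "a = 0" using ab by (rule small_dvd)
    qed simp
    ultimately show ?thesis unfolding cube1_def gab True using g gab True by (simp add: T_one)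
  next
    case False
    then show ?thesis unfolding cube1_def using g gab cube_b by simp
  qed
qed

lemma h9_T:
  assumes g: "g \<in> carrier (T_grp m t)" and g9: "g [^]\<^bsub>T_grp m t\<^esub> (9::nat) = \<one>\<^bsub>T_grp m t\<^esub>"
  shows "g [^]\<^bsub>T_grp m t\<^esub> (3::nat) = \<one>\<^bsub>T_grp m t\<^esub>"
proof -
  obtain a b where gab: "g = (a, b)" by (cases g)
  have ab: "0 \<le> a" "a < m" "0 \<le> b" "b < 3" using g gab by (auto simp: T_carrier)
  show ?thesis
  proof (cases "b = 0")
    case True
    have "(a, 0) [^]\<^bsub>T_grp m t\<^esub> (9::nat) = ((9 * a) mod m, 0)" by (simp add: pow0)
    then have "(9 * a) mod m = 0" using g9 gab True by (simp add: T_one)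
    then have "m dvd 3 ^ 2 * a" by (simp add: dvd_eq_mod_eq_0)
    then have "m dvd a" by (rule dvd3n)
    then have "a = 0" using ab by (rule small_dvd)
    then show ?thesis using gab True by (simp add: pow0 T_one)
  next
    case False
    then show ?thesis using g gab cube_b by simp
  qed
qed

lemma ord_T:
  assumes g: "g \<in> carrier (T_grp m t)"
  shows "(\<exists>n::nat. group.ord (T_grp m t) g = 3 ^ n) = (g \<in> cube1 (T_grp m t))"
proof -
  interpret group "T_grp m t" by (rule grp)
  show ?thesis
  proof
    assume "\<exists>n::nat. ord g = 3 ^ n"
    then obtain n :: nat where n: "ord g = 3 ^ n" by blast
    have gp: "g [^]\<^bsub>T_grp m t\<^esub> ((3::nat) ^ n) = \<one>\<^bsub>T_grp m t\<^esub>" using g n pow_ord_eq_1 by metis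
    obtain a b where gab: "g = (a, b)" by (cases g)
    have ab: "0 \<le> a" "a < m" "0 \<le> b" "b < 3" using g gab by (auto simp: T_carrier)
    show "g \<in> cube1 (T_grp m t)"
    proof (cases "b = 0")
      case True
      have "(a, 0) [^]\<^bsub>T_grp m t\<^esub> ((3::nat) ^ n) = ((3 ^ n * a) mod m, 0)" by (simp add: pow0)
      then have "(3 ^ n * a) mod m = 0" using gp gab True by (simp add: T_one)
      then have "m dvd 3 ^ n * a" by (simp add: dvd_eq_mod_eq_0)
      then have "m dvd a" by (rule dvd3n)
      then have "a = 0" using ab by (rule small_dvd)
      then show ?thesis using cube1_T[OF g] gab True by simp
    next
      case False
      then show ?thesis using cube1_T[OF g] gab by simp
    qed
  next
    assume "g \<in> cube1 (T_grp m t)"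
    then have "g [^]\<^bsub>T_grp m t\<^esub> (3::nat) = \<one>\<^bsub>T_grp m t\<^esub>" unfolding cube1_def by simp
    then have "ord g dvd 3" using g pow_eq_id by blast
    then have le: "ord g \<le> 3" by (rule dvd_imp_le) simp
    then have "ord g = 0 \<or> ord g = 1 \<or> ord g = 2 \<or> ord g = 3" by auto
    then have "ord g = 1 \<or> ord g = 3" using \<open>ord g dvd 3\<close> by auto
    then show "\<exists>n::nat. ord g = 3 ^ n" by (metis power_0 power_one_right)
  qed
qed

end

lemma sum3: "(\<Sum>i\<in>{0..<3::int}. f i) = f 0 + f 1 + f 2"
proof -
  have "{0..<3::int} = {0, 1, 2}" by auto
  then show ?thesis by (simp add: add.assoc)
qed
lemma poly3:
  fixes c :: "int \<Rightarrow> 'a::field"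
  assumes s: "c 0 + c 1 + c 2 = 0" and three: "(3::'a) = 0" and j: "j \<in> {0..<3}"
  shows "(\<Sum>i\<in>{0..<3}. (\<Sum>l\<in>{0..<3}. c l * c ((i - l) mod 3)) * c ((j - i) mod 3)) = 0"
proof -
  have "j = 0 \<or> j = 1 \<or> j = 2" using j by auto
  then show ?thesis
  proof (elim disjE)
    assume "j = 0"
    moreover have "(c 0 * c 0 + c 1 * c 2 + c 2 * c 1) * c 0 + (c 0 * c 1 + c 1 * c 0 + c 2 * c 2) * c 2 + (c 0 * c 2 + c 1 * c 1 + c 2 * c 0) * c 1
      = 3 * (3 * c 0 * c 1 * c 2) + (c 0 + c 1 + c 2) * (c 0 * c 0 + c 1 * c 1 + c 2 * c 2 - c 0 * c 1 - c 1 * c 2 - c 2 * c 0)"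
      by (Groebner_Basis.algebra)
    ultimately show ?thesis using s three by (simp add: sum3)
  next
    assume "j = 1"
    moreover have "(c 0 * c 0 + c 1 * c 2 + c 2 * c 1) * c 1 + (c 0 * c 1 + c 1 * c 0 + c 2 * c 2) * c 0 + (c 0 * c 2 + c 1 * c 1 + c 2 * c 0) * c 2
      = 3 * (c 0 * c 0 * c 1 + c 1 * c 1 * c 2 + c 2 * c 2 * c 0)"
      by (Groebner_Basis.algebra)
    ultimately show ?thesis using s three by (simp add: sum3)
  next
    assume "j = 2"
    moreover have "(c 0 * c 0 + c 1 * c 2 + c 2 * c 1) * c 2 + (c 0 * c 1 + c 1 * c 0 + c 2 * c 2) * c 1 + (c 0 * c 2 + c 1 * c 1 + c 2 * c 0) * c 0
      = 3 * (c 0 * c 0 * c 2 + c 1 * c 1 * c 0 + c 2 * c 2 * c 1)"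
      by (Groebner_Basis.algebra)
    ultimately show ?thesis using s three by (simp add: sum3)
  qed
qed

context Tctx
begin

lemma snd_mult: "x \<in> carrier (T_grp m t) \<Longrightarrow> y \<in> carrier (T_grp m t) \<Longrightarrow>
    snd (x \<otimes>\<^bsub>T_grp m t\<^esub> y) = (snd x + snd y) mod 3"
  by (cases x, cases y) (simp add: T_mult)

lemma snd_carrier: "x \<in> carrier (T_grp m t) \<Longrightarrow> 0 \<le> snd x \<and> snd x < 3"
  by (cases x) (simp add: T_carrier)

lemma snd_invmult:
  assumes p: "p \<in> carrier (T_grp m t)" and g: "g \<in> carrier (T_grp m t)"
  shows "snd (inv\<^bsub>T_grp m t\<^esub> p \<otimes>\<^bsub>T_grp m t\<^esub> g) = (snd g - snd p) mod 3"
proof -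
  interpret group "T_grp m t" by (rule grp)
  define u where "u = snd (inv\<^bsub>T_grp m t\<^esub> p)"
  have ic: "inv\<^bsub>T_grp m t\<^esub> p \<in> carrier (T_grp m t)" using p by simp
  have "(u + snd p) mod 3 = 0" unfolding u_def using snd_mult[OF ic p] p by (simp add: T_one)
  moreover have "u = u mod 3" using snd_carrier[OF ic] unfolding u_def by simp
  ultimately have "u = (- snd p) mod 3" by (metis add.commute add_0 minus_add_cancel mod_add_left_eq mod_minus_eq)
  then have "snd (inv\<^bsub>T_grp m t\<^esub> p \<otimes>\<^bsub>T_grp m t\<^esub> g) = ((- snd p) mod 3 + snd g) mod 3" using snd_mult[OF ic g] unfolding u_def by simp
  also have "\<dots> = (snd g - snd p) mod 3" by (simp add: mod_add_left_eq)
  finally show ?thesis .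
qed

lemma s_val:
  assumes p: "p \<in> carrier (T_grp m t)" and g: "g \<in> carrier (T_grp m t)"
  shows "(inv\<^bsub>T_grp m t\<^esub> p \<otimes>\<^bsub>T_grp m t\<^esub> g \<in> cube1 (T_grp m t)) = (p = g \<or> snd p \<noteq> snd g)"
proof -
  interpret group "T_grp m t" by (rule grp)
  have c: "inv\<^bsub>T_grp m t\<^esub> p \<otimes>\<^bsub>T_grp m t\<^esub> g \<in> carrier (T_grp m t)" using p g by simp
  have e1: "(inv\<^bsub>T_grp m t\<^esub> p \<otimes>\<^bsub>T_grp m t\<^esub> g = (0, 0)) = (p = g)"
  proof
    assume "inv\<^bsub>T_grp m t\<^esub> p \<otimes>\<^bsub>T_grp m t\<^esub> g = (0, 0)"
    then have "inv\<^bsub>T_grp m t\<^esub> p \<otimes>\<^bsub>T_grp m t\<^esub> g = \<one>\<^bsub>T_grp m t\<^esub>" by (simp add: T_one)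
    then show "p = g" using p g by (metis inv_solve_left' r_one one_closed)
  next
    assume "p = g" then show "inv\<^bsub>T_grp m t\<^esub> p \<otimes>\<^bsub>T_grp m t\<^esub> g = (0, 0)" using p by (simp add: T_one)
  qed
  have e2: "(snd (inv\<^bsub>T_grp m t\<^esub> p \<otimes>\<^bsub>T_grp m t\<^esub> g) \<noteq> 0) = (snd p \<noteq> snd g)"
  proof -
    have "((snd g - snd p) mod 3 = 0) = (snd p = snd g)"
      using snd_carrier[OF p] snd_carrier[OF g] by presburger
    then show ?thesis using snd_invmult[OF p g] by simp
  qed
  show ?thesis using cube1_T[OF c] e1 e2 by simp
qed

lemma char3_facts:
  assumes "CHAR('a::field) = 3"
  shows "(3::'a) = 0" "(of_int m :: 'a) = 1"
proof -
  have "(of_nat 3 :: 'a) = 0" using of_nat_CHAR[where 'a='a] assms by simp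
  then show t: "(3::'a) = 0" by simp
  have "(of_int m :: 'a) = 3 * of_nat k + 1" using m_def by simp
  then show "(of_int m :: 'a) = 1" using t by simp
qed

lemma sum_C:
  "(\<Sum>p\<in>carrier (T_grp m t). f (snd p)) = (of_int m :: 'a::field) * (\<Sum>i\<in>{0..<3}. f i)"
proof -
  have "(\<Sum>p\<in>carrier (T_grp m t). f (snd p)) = (\<Sum>a\<in>{0..<m}. \<Sum>i\<in>{0..<3::int}. f i)"
    unfolding T_carrier by (subst sum.cartesian_product) (simp add: case_prod_beta')
  also have "\<dots> = of_nat (card {0..<m}) * (\<Sum>i\<in>{0..<3}. f i)" by simp
  also have "of_nat (card {0..<m}) = (of_int m :: 'a)" using m_pos by simp
  finally show ?thesis .
qed

lemma conv_const:
  fixes \<beta> \<gamma> :: "int \<times> int \<Rightarrow> 'a::field"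
  assumes CH: "(of_int m :: 'a) = 1"
    and \<beta>: "\<And>p. p \<in> carrier (T_grp m t) \<Longrightarrow> \<beta> p = c (snd p)"
    and \<gamma>: "\<And>p. p \<in> carrier (T_grp m t) \<Longrightarrow> \<gamma> p = d (snd p)"
    and g: "g \<in> carrier (T_grp m t)"
  shows "(\<beta> \<otimes>\<^bsub>group_algebra (T_grp m t)\<^esub> \<gamma>) g = (\<Sum>i\<in>{0..<3}. c i * d ((snd g - i) mod 3))"
proof -
  interpret group "T_grp m t" by (rule grp)
  have "(\<beta> \<otimes>\<^bsub>group_algebra (T_grp m t)\<^esub> \<gamma>) g
      = (\<Sum>p\<in>carrier (T_grp m t). \<beta> p * \<gamma> (inv\<^bsub>T_grp m t\<^esub> p \<otimes>\<^bsub>T_grp m t\<^esub> g))"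
    using g by (simp add: ga_mult)
  also have "\<dots> = (\<Sum>p\<in>carrier (T_grp m t). c (snd p) * d ((snd g - snd p) mod 3))"
    using g by (intro sum.cong refl) (simp add: \<beta> \<gamma> snd_invmult)
  also have "\<dots> = (\<Sum>i\<in>{0..<3}. c i * d ((snd g - i) mod 3))"
    using sum_C[of "\<lambda>i. c i * d ((snd g - i) mod 3)"] CH by simp
  finally show ?thesis .
qed

lemma nil_T:
  fixes \<beta> s :: "int \<times> int \<Rightarrow> 'a::field"
  assumes CH3: "CHAR('a) = 3"
    and s: "s = (\<lambda>g. if g \<in> cube1 (T_grp m t) then 1 else 0)"
    and \<beta>c: "\<beta> \<in> carrier (group_algebra (T_grp m t))"
    and \<beta>s: "\<beta> \<otimes>\<^bsub>group_algebra (T_grp m t)\<^esub> s = \<zero>\<^bsub>group_algebra (T_grp m t)\<^esub>"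
  shows "\<beta> \<otimes>\<^bsub>group_algebra (T_grp m t)\<^esub> \<beta> \<otimes>\<^bsub>group_algebra (T_grp m t)\<^esub> \<beta> = \<zero>\<^bsub>group_algebra (T_grp m t)\<^esub>"
proof -
  interpret group "T_grp m t" by (rule grp)
  let ?A = "group_algebra (T_grp m t) :: (int \<times> int \<Rightarrow> 'a) ring"
  let ?C = "carrier (T_grp m t)"
  have three: "(3::'a) = 0" and CH: "(of_int m :: 'a) = 1" using char3_facts[OF CH3] by auto
  have fin: "finite ?C" unfolding T_carrier by simp
  define Q where "Q j = (\<Sum>p\<in>{p \<in> ?C. snd p \<noteq> j}. \<beta> p)" for j
  have bq: "\<beta> g = - Q (snd g)" if g: "g \<in> ?C" for g
  proof -
    have "0 = (\<beta> \<otimes>\<^bsub>?A\<^esub> s) g" using \<beta>s by (simp add: ga_zero)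
    also have "\<dots> = (\<Sum>p\<in>?C. \<beta> p * s (inv\<^bsub>T_grp m t\<^esub> p \<otimes>\<^bsub>T_grp m t\<^esub> g))" using g by (simp add: ga_mult)
    also have "\<dots> = (\<Sum>p\<in>?C. if p = g \<or> snd p \<noteq> snd g then \<beta> p else 0)"
      using g by (intro sum.cong refl) (simp add: s s_val)
    also have "\<dots> = (\<Sum>p\<in>{p \<in> ?C. p = g \<or> snd p \<noteq> snd g}. \<beta> p)"
      using fin by (simp add: sum.inter_filter)
    also have "{p \<in> ?C. p = g \<or> snd p \<noteq> snd g} = insert g {p \<in> ?C. snd p \<noteq> snd g}" using g by auto
    also have "(\<Sum>p\<in>insert g {p \<in> ?C. snd p \<noteq> snd g}. \<beta> p) = \<beta> g + Q (snd g)"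
      unfolding Q_def using fin by (subst sum.insert) auto
    finally show ?thesis by (simp add: eq_neg_iff_add_eq_0)
  qed
  define c where "c j = - Q j" for j
  have bc: "\<And>p. p \<in> ?C \<Longrightarrow> \<beta> p = c (snd p)" unfolding c_def using bq by simp
  have "Q 0 = (\<Sum>p\<in>?C. if snd p \<noteq> 0 then c (snd p) else 0)"
    unfolding Q_def using fin by (simp add: sum.inter_filter bc)
  also have "\<dots> = of_int m * (\<Sum>i\<in>{0..<3}. if i \<noteq> 0 then c i else 0)"
    by (rule sum_C)
  also have "\<dots> = c 1 + c 2" using CH by (simp add: sum3)
  finally have "c 0 = - (c 1 + c 2)" unfolding c_def by simp
  then have csum: "c 0 + c 1 + c 2 = 0" by simp
  define e where "e j = (\<Sum>l\<in>{0..<3}. c l * c ((j - l) mod 3))" for j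
  have bb: "\<And>p. p \<in> ?C \<Longrightarrow> (\<beta> \<otimes>\<^bsub>?A\<^esub> \<beta>) p = e (snd p)"
    unfolding e_def by (rule conv_const[where \<beta>=\<beta> and \<gamma>=\<beta> and c=c and d=c, OF CH bc bc])
  show ?thesis
  proof (rule ext)
    fix g
    show "(\<beta> \<otimes>\<^bsub>?A\<^esub> \<beta> \<otimes>\<^bsub>?A\<^esub> \<beta>) g = \<zero>\<^bsub>?A\<^esub> g"
    proof (cases "g \<in> ?C")
      case True
      have "(\<beta> \<otimes>\<^bsub>?A\<^esub> \<beta> \<otimes>\<^bsub>?A\<^esub> \<beta>) g = (\<Sum>i\<in>{0..<3}. e i * c ((snd g - i) mod 3))"
        by (rule conv_const[where \<beta>="\<beta> \<otimes>\<^bsub>?A\<^esub> \<beta>" and \<gamma>=\<beta> and c=e and d=c, OF CH bb bc True])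
      also have "\<dots> = 0" unfolding e_def
        by (rule poly3[OF csum three]) (use snd_carrier[OF True] in simp)
      finally show ?thesis by (simp add: ga_zero)
    next
      case False
      then show ?thesis by (simp add: ga_mult ga_zero)
    qed
  qed
qed

end

theorem corollary3p5:
  fixes k :: nat and m t :: int and s :: "int \<times> int \<Rightarrow> 'a::{finite,field}"
  assumes "CHAR('a) = 3"
    and "m = 3 * int k + 1"
    and "t ^ 3 mod m = 1 mod m"
    and "gcd m (t - 1) = 1"
    and "s = (\<lambda>g. if g \<in> carrier (T_grp m t) \<and> (\<exists>n::nat. group.ord (T_grp m t) g = 3 ^ n)
                   then 1 else 0)"
  shows "jacobson_radical (group_algebra (T_grp m t) :: (int \<times> int \<Rightarrow> 'a) ring)
       = {\<alpha> \<in> carrier (group_algebra (T_grp m t)).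
            \<alpha> \<otimes>\<^bsub>group_algebra (T_grp m t)\<^esub> s = \<zero>\<^bsub>group_algebra (T_grp m t)\<^esub> \<and>
            s \<otimes>\<^bsub>group_algebra (T_grp m t)\<^esub> \<alpha> = \<zero>\<^bsub>group_algebra (T_grp m t)\<^esub>}"
proof -
  interpret Tctx k m t using assms(2,3,4) by unfold_locales
  let ?T = "T_grp m t"
  let ?A = "group_algebra (T_grp m t) :: (int \<times> int \<Rightarrow> 'a) ring"
  have grpT: "group ?T" by (rule grp)
  have finT: "finite (carrier ?T)" unfolding T_carrier by simp
  interpret R: ring ?A by (rule ga_ring[OF grpT finT])
  have three: "(3::'a) = 0" using char3_facts[OF assms(1)] by simp
  have sT: "s = (\<lambda>g. if g \<in> cube1 ?T then 1 else 0)"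
  proof (rule ext)
    fix g
    show "s g = (if g \<in> cube1 ?T then 1 else 0)"
    proof (cases "g \<in> carrier ?T")
      case True then show ?thesis using assms(5) ord_T[OF True] by simp
    next
      case False
      then have "g \<notin> cube1 ?T" unfolding cube1_def by simp
      then show ?thesis using assms(5) False by simp
    qed
  qed
  have sc: "s \<in> carrier ?A" unfolding sT by (auto simp: ga_carrier cube1_def)
  show ?thesis
  proof (intro equalityI subsetI)
    fix \<alpha> assume J: "\<alpha> \<in> jacobson_radical ?A"
    have "\<alpha> \<in> carrier ?A" using J by (rule R.J_carrier)
    moreover have "\<alpha> \<otimes>\<^bsub>?A\<^esub> s = \<zero>\<^bsub>?A\<^esub> \<and> s \<otimes>\<^bsub>?A\<^esub> \<alpha> = \<zero>\<^bsub>?A\<^esub>"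
      by (rule J_ann[OF grpT finT h9_T three J sT])
    ultimately show "\<alpha> \<in> {\<alpha> \<in> carrier ?A. \<alpha> \<otimes>\<^bsub>?A\<^esub> s = \<zero>\<^bsub>?A\<^esub> \<and> s \<otimes>\<^bsub>?A\<^esub> \<alpha> = \<zero>\<^bsub>?A\<^esub>}"
      by simp
  next
    fix \<alpha> assume "\<alpha> \<in> {\<alpha> \<in> carrier ?A. \<alpha> \<otimes>\<^bsub>?A\<^esub> s = \<zero>\<^bsub>?A\<^esub> \<and> s \<otimes>\<^bsub>?A\<^esub> \<alpha> = \<zero>\<^bsub>?A\<^esub>}"
    then have \<alpha>c: "\<alpha> \<in> carrier ?A" and \<alpha>s: "\<alpha> \<otimes>\<^bsub>?A\<^esub> s = \<zero>\<^bsub>?A\<^esub>" by auto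
    show "\<alpha> \<in> jacobson_radical ?A"
    proof (rule R.nil_in_J[OF \<alpha>c])
      fix r assume r: "r \<in> carrier ?A"
      have bc: "r \<otimes>\<^bsub>?A\<^esub> \<alpha> \<in> carrier ?A" using r \<alpha>c by simp
      have "(r \<otimes>\<^bsub>?A\<^esub> \<alpha>) \<otimes>\<^bsub>?A\<^esub> s = r \<otimes>\<^bsub>?A\<^esub> (\<alpha> \<otimes>\<^bsub>?A\<^esub> s)"
        using r \<alpha>c sc by (simp add: R.m_assoc)
      also have "\<dots> = \<zero>\<^bsub>?A\<^esub>" using \<alpha>s r by simp
      finally have bs: "(r \<otimes>\<^bsub>?A\<^esub> \<alpha>) \<otimes>\<^bsub>?A\<^esub> s = \<zero>\<^bsub>?A\<^esub>" .
      show "r \<otimes>\<^bsub>?A\<^esub> \<alpha> \<otimes>\<^bsub>?A\<^esub> (r \<otimes>\<^bsub>?A\<^esub> \<alpha>) \<otimes>\<^bsub>?A\<^esub> (r \<otimes>\<^bsub>?A\<^esub> \<alpha>) = \<zero>\<^bsub>?A\<^esub>"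
        by (rule nil_T[OF assms(1) sT bc bs])
    qed
  qed
qed

end
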